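(* Let $f$ be a min-tradeoff function, let $\mathrm{rate}$ be a convex rate function, and let $\alpha\in(1,2)$. Then the optimisation $$\inf_{p\in\mathcal{Q}}\Big(\Delta(f,p)-(\alpha-1)V(f,p)-(\alpha-1)^2K_\alpha(f)\Big)$$ is a convex optimisation problem, i.e. $\mathcal{Q}$ is a convex set and the objective $p\mapsto \Delta(f,p)-(\alpha-1)V(f,p)-(\alpha-1)^2K_\alpha(f)$ is a convex function on $\mathcal{Q}$.
   Context: Fix finite alphabets $\mathcal{A},\mathcal{B},\mathcal{X}$ and a function $x:\mathcal{A}\times\mathcal{B}\to\mathcal{X}$; let $d_A=|\mathcal{A}|$. An EAT channel acting on a finite-dimensional system $R$ is a channel $\mathcal{M}(\rho)=\sum_{a,b}|a\rangle\langle a|_A\otimes|b\rangle\langle b|_B\otimes|x(a,b)\rangle\langle x(a,b)|_X\otimes\mathcal{M}^{ab}(\rho)$ with each $\mathcal{M}^{ab}$ completely positive, trace non-increasing, and $\sum_{ab}\mathcal{M}^{ab}$ trace preserving. $\mathcal{Q}$ is the set of distributions $q$ on $\mathcal{X}$ that arise as the distribution of the register $X$ of $\mathcal{M}(\omega_{RR'})$ for some EAT channel $\mathcal{M}$ on $R$ and state $\omega_{RR'}$ ($R'$ arbitrary finite-dimensional, untouched by $\mathcal{M}$); $\Gamma(q)$ is the set of such pairs achieving $q$. A rate function is a function $\mathrm{rate}:\mathcal{Q}\to\mathbb{R}$ with $\mathrm{rate}(q)\le\inf_{(\omega,\mathcal{M})\in\Gamma(q)}H(A|BR')_{\mathcal{M}(\omega)}$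 for all $q\in\mathcal{Q}$ (conditional von Neumann entropy); a min-tradeoff function $f$ is an affine rate function, extended affinely to all probability distributions on $\mathcal{X}$. Writing $\delta_x$ for the point distribution at $x$: $\Delta(f,p):=\mathrm{rate}(p)-f(p)$; $\mathrm{Var}_p(f):=\sum_x p(x)\big(f(\delta_x)-\sum_{y}p(y)f(\delta_y)\big)^2$; $V(f,p):=\frac{\ln 2}{2}\big(\log(1+2d_A^2)+\sqrt{2+\mathrm{Var}_p(f)}\big)^2$ ($\log$ is base 2); $\mathrm{Max}(f):=\max_{p}f(p)$ over all distributions $p$ on $\mathcal{X}$; $\mathrm{Min}_{\mathcal{Q}}(f):=\inf_{p\in\mathcal{Q}}f(p)$; and $K_\alpha(f):=\frac{1}{6(2-\alpha)^3\ln 2}2^{(\alpha-1)(\log d_A+\mathrm{Max}(f)-\mathrm{Min}_{\mathcal{Q}}(f))}\ln^3\big(2^{\log d_A+\mathrm{Max}(f)-\mathrm{Min}_{\mathcal{Q}}(f)}+e^2\big)$, a constant independent of $p$. *)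

theory Defs
  imports "HOL-Analysis.Analysis" "Jordan_Normal_Form.Char_Poly"
begin

definition mtrace :: "complex mat \<Rightarrow> complex" where
  "mtrace A = (\<Sum>i<dim_row A. A $$ (i, i))"

definition psd :: "nat \<Rightarrow> complex mat \<Rightarrow> bool" where
  "psd n A \<longleftrightarrow> A \<in> carrier_mat n n \<and>
     (\<forall>v \<in> carrier_vec n. Im ((A *\<^sub>v v) \<bullet>c v) = 0 \<and> 0 \<le> Re ((A *\<^sub>v v) \<bullet>c v))"

definition density :: "nat \<Rightarrow> complex mat \<Rightarrow> bool" where
  "density n A \<longleftrightarrow> psd n A \<and> mtrace A = 1"

definition eigvals :: "complex mat \<Rightarrow> complex list" where
  "eigvals A = (SOME as. char_poly A = (\<Prod>a\<leftarrow>as. [:- a, 1:]) \<and> length as = dim_row A)"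

text \<open>von Neumann entropy (base 2), with the convention 0 log 0 = 0.\<close>
definition vN_entropy :: "complex mat \<Rightarrow> real" where
  "vN_entropy A = - (\<Sum>a\<leftarrow>eigvals A. (if Re a = 0 then 0 else Re a * log 2 (Re a)))"

text \<open>Bipartite system P (dimension dP) tensor S (dimension dS): basis index p*dS + s.
  The (i,j) block (w.r.t. the first factor) of an operator on P tensor S.\<close>
definition block :: "nat \<Rightarrow> complex mat \<Rightarrow> nat \<Rightarrow> nat \<Rightarrow> complex mat" where
  "block dS \<rho> i j = mat dS dS (\<lambda>(r, s). \<rho> $$ (i * dS + r, j * dS + s))"

text \<open>(id_P tensor \<Phi>)(\<rho>) for \<rho> on P tensor S, \<Phi> a map from S (dim dIn) to an output system (dim dOut).\<close>
definition id_tensor :: "nat \<Rightarrow> nat \<Rightarrow> nat \<Rightarrow> (complex mat \<Rightarrow> complex mat) \<Rightarrow> complex mat \<Rightarrow> complex mat" where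
  "id_tensor dP dIn dOut \<Phi> \<rho> = mat (dP * dOut) (dP * dOut)
     (\<lambda>(i, j). \<Phi> (block dIn \<rho> (i div dOut) (j div dOut)) $$ (i mod dOut, j mod dOut))"

definition ptrace2 :: "nat \<Rightarrow> nat \<Rightarrow> complex mat \<Rightarrow> complex mat" where
  "ptrace2 dP dS \<rho> = mat dP dP (\<lambda>(i, j). \<Sum>k<dS. \<rho> $$ (i * dS + k, j * dS + k))"

definition linear_map :: "nat \<Rightarrow> nat \<Rightarrow> (complex mat \<Rightarrow> complex mat) \<Rightarrow> bool" where
  "linear_map dIn dOut \<Phi> \<longleftrightarrow>
     (\<forall>A \<in> carrier_mat dIn dIn. \<Phi> A \<in> carrier_mat dOut dOut) \<and>
     (\<forall>A \<in> carrier_mat dIn dIn. \<forall>B \<in> carrier_mat dIn dIn. \<Phi> (A + B) = \<Phi> A + \<Phi> B) \<and>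
     (\<forall>A \<in> carrier_mat dIn dIn. \<forall>c. \<Phi> (c \<cdot>\<^sub>m A) = c \<cdot>\<^sub>m \<Phi> A)"

definition completely_positive :: "nat \<Rightarrow> nat \<Rightarrow> (complex mat \<Rightarrow> complex mat) \<Rightarrow> bool" where
  "completely_positive dIn dOut \<Phi> \<longleftrightarrow> linear_map dIn dOut \<Phi> \<and>
     (\<forall>k \<rho>. psd (k * dIn) \<rho> \<longrightarrow> psd (k * dOut) (id_tensor k dIn dOut \<Phi> \<rho>))"

definition trace_nonincreasing :: "nat \<Rightarrow> (complex mat \<Rightarrow> complex mat) \<Rightarrow> bool" where
  "trace_nonincreasing dIn \<Phi> \<longleftrightarrow> (\<forall>\<rho>. psd dIn \<rho> \<longrightarrow> Re (mtrace (\<Phi> \<rho>)) \<le> Re (mtrace \<rho>))"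

text \<open>Trace preservation of the sum of branches is written as a sum of traces (trace is additive).
  An EAT channel on R (dimension dR) with output system of dimension dOut, given by
  its family of branches M^{ab}, a < dA, b < dB (alphabets A = {0..<dA}, B = {0..<dB}).\<close>
definition EAT_channel :: "nat \<Rightarrow> nat \<Rightarrow> nat \<Rightarrow> nat \<Rightarrow> (nat \<Rightarrow> nat \<Rightarrow> complex mat \<Rightarrow> complex mat) \<Rightarrow> bool" where
  "EAT_channel dA dB dR dOut M \<longleftrightarrow>
     (\<forall>a<dA. \<forall>b<dB. completely_positive dR dOut (M a b) \<and> trace_nonincreasing dR (M a b)) \<and>
     (\<forall>\<rho> \<in> carrier_mat dR dR. (\<Sum>a<dA. \<Sum>b<dB. mtrace (M a b \<rho>)) = mtrace \<rho>)"

text \<open>The joint state omega lives on R' tensor R (dimensions dR', dR); the channel acts on R.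
  sigma_ab = tr_Out((id_{R'} tensor M^{ab})(omega)), an operator on R'.\<close>
definition branch_state :: "nat \<Rightarrow> nat \<Rightarrow> nat \<Rightarrow> (nat \<Rightarrow> nat \<Rightarrow> complex mat \<Rightarrow> complex mat)
    \<Rightarrow> complex mat \<Rightarrow> nat \<Rightarrow> nat \<Rightarrow> complex mat" where
  "branch_state dR dR' dOut M \<omega> a b = ptrace2 dR' dOut (id_tensor dR' dR dOut (M a b) \<omega>)"

definition X_dist :: "nat \<Rightarrow> nat \<Rightarrow> (nat \<Rightarrow> nat \<Rightarrow> 'x::finite) \<Rightarrow> nat \<Rightarrow> nat \<Rightarrow> nat
    \<Rightarrow> (nat \<Rightarrow> nat \<Rightarrow> complex mat \<Rightarrow> complex mat) \<Rightarrow> complex mat \<Rightarrow> real^'x" where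
  "X_dist dA dB xf dR dR' dOut M \<omega> = (\<chi> x. \<Sum>a<dA. \<Sum>b<dB.
      if xf a b = x then Re (mtrace (id_tensor dR' dR dOut (M a b) \<omega>)) else 0)"

text \<open>Marginal of M(omega) on A B R' (block diagonal in the classical registers, basis index (a*dB+b)*dR'+r).\<close>
definition ABR'_state :: "nat \<Rightarrow> nat \<Rightarrow> nat \<Rightarrow> (nat \<Rightarrow> nat \<Rightarrow> complex mat) \<Rightarrow> complex mat" where
  "ABR'_state dA dB dR' \<sigma> = mat (dA * dB * dR') (dA * dB * dR') (\<lambda>(i, j).
     if i div dR' = j div dR'
     then \<sigma> (i div dR' div dB) (i div dR' mod dB) $$ (i mod dR', j mod dR') else 0)"

text \<open>Marginal of M(omega) on B R' (basis index b*dR'+r).\<close>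
definition BR'_state :: "nat \<Rightarrow> nat \<Rightarrow> nat \<Rightarrow> (nat \<Rightarrow> nat \<Rightarrow> complex mat) \<Rightarrow> complex mat" where
  "BR'_state dA dB dR' \<sigma> = mat (dB * dR') (dB * dR') (\<lambda>(i, j).
     if i div dR' = j div dR'
     then (\<Sum>a<dA. \<sigma> a (i div dR') $$ (i mod dR', j mod dR')) else 0)"

definition cond_entropy :: "nat \<Rightarrow> nat \<Rightarrow> nat \<Rightarrow> nat \<Rightarrow> nat
    \<Rightarrow> (nat \<Rightarrow> nat \<Rightarrow> complex mat \<Rightarrow> complex mat) \<Rightarrow> complex mat \<Rightarrow> real" where
  "cond_entropy dA dB dR dR' dOut M \<omega> =
     vN_entropy (ABR'_state dA dB dR' (branch_state dR dR' dOut M \<omega>))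
     - vN_entropy (BR'_state dA dB dR' (branch_state dR dR' dOut M \<omega>))"

definition admissible :: "nat \<Rightarrow> nat \<Rightarrow> nat \<Rightarrow> nat \<Rightarrow> nat
    \<Rightarrow> (nat \<Rightarrow> nat \<Rightarrow> complex mat \<Rightarrow> complex mat) \<Rightarrow> complex mat \<Rightarrow> bool" where
  "admissible dA dB dR dR' dOut M \<omega> \<longleftrightarrow>
     EAT_channel dA dB dR dOut M \<and> density (dR' * dR) \<omega>"

definition QSet :: "nat \<Rightarrow> nat \<Rightarrow> (nat \<Rightarrow> nat \<Rightarrow> 'x::finite) \<Rightarrow> (real^'x) set" where
  "QSet dA dB xf = {q. \<exists>dR dR' dOut M \<omega>. admissible dA dB dR dR' dOut M \<omega> \<and>
       X_dist dA dB xf dR dR' dOut M \<omega> = q}"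

definition is_rate_function :: "nat \<Rightarrow> nat \<Rightarrow> (nat \<Rightarrow> nat \<Rightarrow> 'x::finite) \<Rightarrow> (real^'x \<Rightarrow> real) \<Rightarrow> bool" where
  "is_rate_function dA dB xf r \<longleftrightarrow>
     (\<forall>q \<in> QSet dA dB xf. \<forall>dR dR' dOut M \<omega>.
        admissible dA dB dR dR' dOut M \<omega> \<and> X_dist dA dB xf dR dR' dOut M \<omega> = q
        \<longrightarrow> r q \<le> cond_entropy dA dB dR dR' dOut M \<omega>)"

definition convex_rate :: "nat \<Rightarrow> nat \<Rightarrow> (nat \<Rightarrow> nat \<Rightarrow> 'x::finite) \<Rightarrow> (real^'x \<Rightarrow> real) \<Rightarrow> bool" where
  "convex_rate dA dB xf r \<longleftrightarrow>
     (\<forall>p \<in> QSet dA dB xf. \<forall>q \<in> QSet dA dB xf. \<forall>t::real. 0 \<le> t \<and> t \<le> 1 \<and>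
        t *\<^sub>R p + (1 - t) *\<^sub>R q \<in> QSet dA dB xf \<longrightarrow>
        r (t *\<^sub>R p + (1 - t) *\<^sub>R q) \<le> t * r p + (1 - t) * r q)"

definition prob_dists :: "(real^'x::finite) set" where
  "prob_dists = {p. (\<forall>x. 0 \<le> p $ x) \<and> (\<Sum>x\<in>UNIV. p $ x) = 1}"

definition point_dist :: "'x::finite \<Rightarrow> real^'x" where
  "point_dist x = (\<chi> y. if y = x then 1 else 0)"

definition affine_on_dists :: "(real^'x::finite \<Rightarrow> real) \<Rightarrow> bool" where
  "affine_on_dists f \<longleftrightarrow> (\<forall>p \<in> prob_dists. \<forall>q \<in> prob_dists. \<forall>t::real. 0 \<le> t \<and> t \<le> 1 \<longrightarrow>
      f (t *\<^sub>R p + (1 - t) *\<^sub>R q) = t * f p + (1 - t) * f q)"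

definition min_tradeoff :: "nat \<Rightarrow> nat \<Rightarrow> (nat \<Rightarrow> nat \<Rightarrow> 'x::finite) \<Rightarrow> (real^'x \<Rightarrow> real) \<Rightarrow> bool" where
  "min_tradeoff dA dB xf f \<longleftrightarrow> affine_on_dists f \<and> is_rate_function dA dB xf f"

definition Var_f :: "(real^'x::finite \<Rightarrow> real) \<Rightarrow> real^'x \<Rightarrow> real" where
  "Var_f f p = (\<Sum>x\<in>UNIV. p $ x * (f (point_dist x) - (\<Sum>y\<in>UNIV. p $ y * f (point_dist y)))^2)"

definition V_f :: "nat \<Rightarrow> (real^'x::finite \<Rightarrow> real) \<Rightarrow> real^'x \<Rightarrow> real" where
  "V_f dA f p = ln 2 / 2 * (log 2 (1 + 2 * (real dA)^2) + sqrt (2 + Var_f f p))^2"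

definition Max_f :: "(real^'x::finite \<Rightarrow> real) \<Rightarrow> real" where
  "Max_f f = (SUP p \<in> prob_dists. f p)"

definition Min_Q_f :: "nat \<Rightarrow> nat \<Rightarrow> (nat \<Rightarrow> nat \<Rightarrow> 'x::finite) \<Rightarrow> (real^'x \<Rightarrow> real) \<Rightarrow> real" where
  "Min_Q_f dA dB xf f = (INF p \<in> QSet dA dB xf. f p)"

definition K_alpha :: "nat \<Rightarrow> nat \<Rightarrow> (nat \<Rightarrow> nat \<Rightarrow> 'x::finite) \<Rightarrow> real \<Rightarrow> (real^'x \<Rightarrow> real) \<Rightarrow> real" where
  "K_alpha dA dB xf \<alpha> f =
     (let c = log 2 (real dA) + Max_f f - Min_Q_f dA dB xf f in
      1 / (6 * (2 - \<alpha>)^3 * ln 2) * 2 powr ((\<alpha> - 1) * c) * (ln (2 powr c + exp 2))^3)"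

definition Delta_f :: "(real^'x::finite \<Rightarrow> real) \<Rightarrow> (real^'x \<Rightarrow> real) \<Rightarrow> real^'x \<Rightarrow> real" where
  "Delta_f rate f p = rate p - f p"

end

theory Submission imports Defs begin

lemma sum_div_mod_split:
  fixes g :: "nat \<Rightarrow> 'a::comm_monoid_add"
  shows "(\<Sum>i<k*n. g i) = (\<Sum>j<k. \<Sum>r<n. g (j*n + r))"
proof (induction k)
  case 0 then show ?case by simp
next
  case (Suc k)
  have "(\<Sum>i<Suc k*n. g i) = (\<Sum>i<k*n. g i) + (\<Sum>i\<in>{k*n..<k*n+n}. g i)"
    by (simp add: sum.atLeastLessThan_concat[symmetric] lessThan_atLeast0 add.commute)
  also have "(\<Sum>i\<in>{k*n..<k*n+n}. g i) = (\<Sum>r<n. g (k*n + r))"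
    using sum.shift_bounds_nat_ivl[of g 0 "k*n" n] by (simp add: lessThan_atLeast0 add.commute)
  finally show ?case using Suc by simp
qed

lemma psd_diag: assumes "psd n A" "i < n" shows "0 \<le> Re (A $$ (i,i))"
proof -
  have A: "A \<in> carrier_mat n n" using assms unfolding psd_def by auto
  have "0 \<le> Re ((A *\<^sub>v unit_vec n i) \<bullet>c unit_vec n i)"
    using assms unfolding psd_def by auto
  moreover have "(A *\<^sub>v unit_vec n i) \<bullet>c unit_vec n i = A $$ (i,i)"
    using A assms(2) by (simp add: scalar_prod_def mult_mat_vec_def unit_vec_def conjugate_vec_def
       if_distrib[where f="\<lambda>x. _ * x"] if_distrib[where f=cnj] sum.If_cases)
  ultimately show ?thesis by simp
qed

lemma psd_trace: assumes "psd n A" shows "0 \<le> Re (mtrace A)"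
proof -
  have A: "A \<in> carrier_mat n n" using assms unfolding psd_def by auto
  show ?thesis unfolding mtrace_def using A psd_diag[OF assms]
    by (auto simp: Re_sum intro!: sum_nonneg)
qed

lemma trace_id_tensor:
  assumes "\<And>j. j < k \<Longrightarrow> \<Phi> (block dIn \<rho> j j) \<in> carrier_mat dOut dOut"
  shows "mtrace (id_tensor k dIn dOut \<Phi> \<rho>) = (\<Sum>j<k. mtrace (\<Phi> (block dIn \<rho> j j)))"
proof -
  have "mtrace (id_tensor k dIn dOut \<Phi> \<rho>) =
     (\<Sum>i<k*dOut. \<Phi> (block dIn \<rho> (i div dOut) (i div dOut)) $$ (i mod dOut, i mod dOut))"
    unfolding mtrace_def id_tensor_def by (simp add: mult.commute)
  also have "\<dots> = (\<Sum>j<k. \<Sum>r<dOut. \<Phi> (block dIn \<rho> j j) $$ (r, r))"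
    by (subst sum_div_mod_split) (auto intro!: sum.cong)
  also have "\<dots> = (\<Sum>j<k. mtrace (\<Phi> (block dIn \<rho> j j)))"
    unfolding mtrace_def using assms by (auto intro!: sum.cong)
  finally show ?thesis .
qed

lemma trace_blocks:
  assumes "\<rho> \<in> carrier_mat (k*n) (k*n)"
  shows "mtrace \<rho> = (\<Sum>j<k. mtrace (block n \<rho> j j))"
proof -
  have "mtrace \<rho> = (\<Sum>i<k*n. \<rho> $$ (i,i))" unfolding mtrace_def using assms by simp
  also have "\<dots> = (\<Sum>j<k. \<Sum>r<n. \<rho> $$ (j*n+r, j*n+r))" by (rule sum_div_mod_split)
  also have "\<dots> = (\<Sum>j<k. mtrace (block n \<rho> j j))"
    unfolding mtrace_def block_def by (auto intro!: sum.cong)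
  finally show ?thesis .
qed


lemma smult_quad:
  assumes "A \<in> carrier_mat n n" "v \<in> carrier_vec n"
  shows "((c \<cdot>\<^sub>m A) *\<^sub>v v) \<bullet>c v = c * ((A *\<^sub>v v) \<bullet>c v)"
proof -
  have "(c \<cdot>\<^sub>m A) *\<^sub>v v = c \<cdot>\<^sub>v (A *\<^sub>v v)"
    using assms by (intro eq_vecI) (auto simp: mult_mat_vec_def scalar_prod_def sum_distrib_left mult.assoc)
  moreover have "A *\<^sub>v v \<in> carrier_vec n" "conjugate v \<in> carrier_vec n" using assms by auto
  ultimately show ?thesis by (simp add: smult_scalar_prod_distrib[of _ n])
qed

lemma psd_smult: assumes "psd n A" "0 \<le> c" shows "psd n (complex_of_real c \<cdot>\<^sub>m A)"
  using assms unfolding psd_def by (auto simp: smult_quad)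

lemma mtrace_smult: assumes "A \<in> carrier_mat n n" shows "mtrace (c \<cdot>\<^sub>m A) = c * mtrace A"
  unfolding mtrace_def using assms by (simp add: sum_distrib_left)

lemma id_tensor_smult1:
  assumes "\<rho> \<in> carrier_mat k k"
  shows "id_tensor k 1 1 (\<lambda>\<rho>. c \<cdot>\<^sub>m \<rho>) \<rho> = c \<cdot>\<^sub>m \<rho>"
  using assms by (intro eq_matI) (auto simp: id_tensor_def block_def)

definition pushD :: "nat \<Rightarrow> nat \<Rightarrow> (nat \<Rightarrow> nat \<Rightarrow> 'x::finite) \<Rightarrow> (nat \<Rightarrow> nat \<Rightarrow> real) \<Rightarrow> real^'x" where
  "pushD dA dB xf P = (\<chi> x. \<Sum>a<dA. \<Sum>b<dB. if xf a b = x then P a b else 0)"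

definition DSet :: "nat \<Rightarrow> nat \<Rightarrow> (nat \<Rightarrow> nat \<Rightarrow> 'x::finite) \<Rightarrow> (real^'x) set" where
  "DSet dA dB xf = {q. \<exists>P. (\<forall>a<dA. \<forall>b<dB. 0 \<le> P a b) \<and> (\<Sum>a<dA. \<Sum>b<dB. P a b) = 1 \<and>
     q = pushD dA dB xf P}"

lemma QSet_sub_DSet: "QSet dA dB xf \<subseteq> DSet dA dB xf"
proof
  fix q assume "q \<in> QSet dA dB xf"
  then obtain dR dR' dOut M \<omega> where adm: "admissible dA dB dR dR' dOut M \<omega>"
    and q: "X_dist dA dB xf dR dR' dOut M \<omega> = q" unfolding QSet_def by blast
  have EAT: "EAT_channel dA dB dR dOut M" and den: "density (dR' * dR) \<omega>"
    using adm unfolding admissible_def by auto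
  have om: "\<omega> \<in> carrier_mat (dR'*dR) (dR'*dR)" using den unfolding density_def psd_def by auto
  define P where "P a b = Re (mtrace (id_tensor dR' dR dOut (M a b) \<omega>))" for a b
  have cp: "completely_positive dR dOut (M a b)" if "a < dA" "b < dB" for a b
    using EAT that unfolding EAT_channel_def by auto
  have nn: "\<forall>a<dA. \<forall>b<dB. 0 \<le> P a b"
  proof (intro allI impI)
    fix a b assume ab: "a < dA" "b < dB"
    have "psd (dR' * dOut) (id_tensor dR' dR dOut (M a b) \<omega>)"
      using cp[OF ab] den unfolding completely_positive_def density_def by auto
    then show "0 \<le> P a b" unfolding P_def by (rule psd_trace)
  qed
  have tr: "mtrace (id_tensor dR' dR dOut (M a b) \<omega>) = (\<Sum>j<dR'. mtrace (M a b (block dR \<omega> j j)))"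
    if ab: "a < dA" "b < dB" for a b
  proof (rule trace_id_tensor)
    fix j assume "j < dR'"
    have "block dR \<omega> j j \<in> carrier_mat dR dR" unfolding block_def by simp
    then show "M a b (block dR \<omega> j j) \<in> carrier_mat dOut dOut"
      using cp[OF ab] unfolding completely_positive_def linear_map_def by auto
  qed
  have "(\<Sum>a<dA. \<Sum>b<dB. mtrace (id_tensor dR' dR dOut (M a b) \<omega>))
      = (\<Sum>a<dA. \<Sum>b<dB. \<Sum>j<dR'. mtrace (M a b (block dR \<omega> j j)))"
    using tr by (auto intro!: sum.cong)
  also have "\<dots> = (\<Sum>a<dA. \<Sum>j<dR'. \<Sum>b<dB. mtrace (M a b (block dR \<omega> j j)))"
    by (rule sum.cong[OF refl], rule sum.swap)
  also have "\<dots> = (\<Sum>j<dR'. \<Sum>a<dA. \<Sum>b<dB. mtrace (M a b (block dR \<omega> j j)))"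
    by (rule sum.swap)
  also have "\<dots> = (\<Sum>j<dR'. mtrace (block dR \<omega> j j))"
  proof (rule sum.cong[OF refl])
    fix j assume "j \<in> {..<dR'}"
    have "block dR \<omega> j j \<in> carrier_mat dR dR" by (simp add: block_def)
    then show "(\<Sum>a<dA. \<Sum>b<dB. mtrace (M a b (block dR \<omega> j j))) = mtrace (block dR \<omega> j j)"
      using EAT unfolding EAT_channel_def by blast
  qed
  also have "\<dots> = mtrace \<omega>" using trace_blocks[OF om] by simp
  also have "\<dots> = 1" using den unfolding density_def by simp
  finally have "(\<Sum>a<dA. \<Sum>b<dB. P a b) = 1" unfolding P_def by (simp flip: Re_sum)
  moreover have "q = pushD dA dB xf P"
    using q unfolding X_dist_def pushD_def P_def by simp
  ultimately show "q \<in> DSet dA dB xf" using nn unfolding DSet_def by blast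
qed

lemma DSet_sub_QSet: "DSet dA dB xf \<subseteq> QSet dA dB xf"
proof
  fix q assume "q \<in> DSet dA dB xf"
  then obtain P where nn: "\<forall>a<dA. \<forall>b<dB. 0 \<le> P a b" and s1: "(\<Sum>a<dA. \<Sum>b<dB. P a b) = 1"
    and q: "q = pushD dA dB xf P" unfolding DSet_def by blast
  have le1: "P a b \<le> 1" if ab: "a < dA" "b < dB" for a b
  proof -
    have "P a b \<le> (\<Sum>b<dB. P a b)" using ab nn by (intro member_le_sum) auto
    also have "\<dots> \<le> (\<Sum>a<dA. \<Sum>b<dB. P a b)"
      using ab nn by (intro member_le_sum[where f="\<lambda>a. \<Sum>b<dB. P a b"] sum_nonneg) auto
    finally show ?thesis using s1 by simp
  qed
  define M where "M a b = (\<lambda>\<rho>::complex mat. complex_of_real (P a b) \<cdot>\<^sub>m \<rho>)" for a b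
  define \<omega> where "\<omega> = (1\<^sub>m 1 :: complex mat)"
  have lin: "linear_map 1 1 (M a b)" for a b
    unfolding linear_map_def M_def
  proof (intro conjI ballI allI)
    fix A B :: "complex mat" and c assume A: "A \<in> carrier_mat 1 1" and B: "B \<in> carrier_mat 1 1"
    show "complex_of_real (P a b) \<cdot>\<^sub>m A \<in> carrier_mat 1 1" using A by simp
    show "complex_of_real (P a b) \<cdot>\<^sub>m (A + B) = complex_of_real (P a b) \<cdot>\<^sub>m A + complex_of_real (P a b) \<cdot>\<^sub>m B"
      using A B by (rule add_smult_distrib_left_mat)
    show "complex_of_real (P a b) \<cdot>\<^sub>m (c \<cdot>\<^sub>m A) = c \<cdot>\<^sub>m (complex_of_real (P a b) \<cdot>\<^sub>m A)"
      using A by (intro eq_matI) auto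
  qed
  have cp: "completely_positive 1 1 (M a b)" if "a < dA" "b < dB" for a b
    unfolding completely_positive_def
  proof (intro conjI allI impI lin)
    fix k \<rho> assume "psd (k * 1) \<rho>"
    then have "psd k \<rho>" "\<rho> \<in> carrier_mat k k" unfolding psd_def by auto
    then show "psd (k * 1) (id_tensor k 1 1 (M a b) \<rho>)"
      unfolding M_def using id_tensor_smult1 psd_smult nn that by simp
  qed
  have tn: "trace_nonincreasing 1 (M a b)" if ab: "a < dA" "b < dB" for a b
    unfolding trace_nonincreasing_def
  proof (intro allI impI)
    fix \<rho> assume "psd 1 \<rho>"
    then have "0 \<le> Re (mtrace \<rho>)" by (rule psd_trace)
    have rc: "\<rho> \<in> carrier_mat 1 1" using \<open>psd 1 \<rho>\<close> unfolding psd_def by auto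
    show "Re (mtrace (M a b \<rho>)) \<le> Re (mtrace \<rho>)"
      unfolding M_def mtrace_smult[OF rc] using le1[OF ab] nn ab \<open>0 \<le> Re (mtrace \<rho>)\<close>
      by (simp add: mult_left_le_one_le)
  qed
  have EAT: "EAT_channel dA dB 1 1 M"
    unfolding EAT_channel_def
  proof (intro conjI allI impI ballI cp tn)
    fix \<rho> :: "complex mat" assume rc: "\<rho> \<in> carrier_mat 1 1"
    have "(\<Sum>a<dA. \<Sum>b<dB. mtrace (M a b \<rho>)) = (\<Sum>a<dA. \<Sum>b<dB. complex_of_real (P a b)) * mtrace \<rho>"
      unfolding M_def mtrace_smult[OF rc] by (simp add: sum_distrib_right)
    also have "(\<Sum>a<dA. \<Sum>b<dB. complex_of_real (P a b)) = 1"
    proof -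
      have "(\<Sum>a<dA. \<Sum>b<dB. complex_of_real (P a b)) = complex_of_real (\<Sum>a<dA. \<Sum>b<dB. P a b)"
        by simp
      then show ?thesis using s1 by simp
    qed
    finally show "(\<Sum>a<dA. \<Sum>b<dB. mtrace (M a b \<rho>)) = mtrace \<rho>" by simp
  qed
  have ps: "psd 1 (1\<^sub>m 1 :: complex mat)"
    unfolding psd_def
  proof (intro conjI ballI)
    fix v :: "complex vec" assume v: "v \<in> carrier_vec 1"
    have e: "(1\<^sub>m 1 *\<^sub>v v) \<bullet>c v = v \<bullet>c v" using v by simp
    have "v \<bullet>c v \<ge> 0" by (rule conjugate_square_ge_0_vec)
    then show "Im ((1\<^sub>m 1 *\<^sub>v v) \<bullet>c v) = 0" "0 \<le> Re ((1\<^sub>m 1 *\<^sub>v v) \<bullet>c v)"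
      unfolding e by (auto simp: less_eq_complex_def)
  qed auto
  have den: "density (1 * 1) \<omega>"
    unfolding density_def \<omega>_def using ps by (simp add: mtrace_def)
  have adm: "admissible dA dB 1 1 1 M \<omega>" unfolding admissible_def using EAT den by simp
  have re: "Re (mtrace (id_tensor 1 1 1 (M a b) \<omega>)) = P a b" for a b
    unfolding M_def \<omega>_def by (subst id_tensor_smult1) (auto simp: mtrace_def)
  have "X_dist dA dB xf 1 1 1 M \<omega> = q"
    unfolding q X_dist_def pushD_def re ..
  then show "q \<in> QSet dA dB xf" using adm unfolding QSet_def by blast
qed


lemma pushD_comb:
  "pushD dA dB xf (\<lambda>a b. u * P a b + v * Q a b) = u *\<^sub>R pushD dA dB xf P + v *\<^sub>R pushD dA dB xf Q"
proof -
  have e: "(if c then u * p + v * q else 0) = u * (if c then p else 0) + v * (if c then q else 0)"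
    for c and p q :: real by simp
  show ?thesis unfolding pushD_def
    by (rule Finite_Cartesian_Product.vec_eq_iff[THEN iffD2], rule allI) (simp add: e sum.distrib sum_distrib_left)
qed

lemma convex_DSet: "convex (DSet dA dB xf)"
  unfolding convex_def
proof (intro ballI allI impI)
  fix x y and u v :: real assume x: "x \<in> DSet dA dB xf" and y: "y \<in> DSet dA dB xf"
    and u: "0 \<le> u" and v: "0 \<le> v" and uv0: "u + v = 1"
  have uv: "0 \<le> u \<and> 0 \<le> v \<and> u + v = 1" using u v uv0 by simp
  obtain P where P: "\<forall>a<dA. \<forall>b<dB. 0 \<le> P a b" "(\<Sum>a<dA. \<Sum>b<dB. P a b) = 1" "x = pushD dA dB xf P"
    using x unfolding DSet_def by blast
  obtain Q where Q: "\<forall>a<dA. \<forall>b<dB. 0 \<le> Q a b" "(\<Sum>a<dA. \<Sum>b<dB. Q a b) = 1" "y = pushD dA dB xf Q"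
    using y unfolding DSet_def by blast
  define W where "W a b = u * P a b + v * Q a b" for a b
  have n: "\<forall>a<dA. \<forall>b<dB. 0 \<le> W a b" using P(1) Q(1) uv unfolding W_def by simp
  have "(\<Sum>a<dA. \<Sum>b<dB. W a b) = u * (\<Sum>a<dA. \<Sum>b<dB. P a b) + v * (\<Sum>a<dA. \<Sum>b<dB. Q a b)"
    unfolding W_def by (simp only: sum.distrib sum_distrib_left)
  then have s: "(\<Sum>a<dA. \<Sum>b<dB. W a b) = 1" using P(2) Q(2) uv by simp
  have e: "u *\<^sub>R x + v *\<^sub>R y = pushD dA dB xf W" unfolding W_def P(3) Q(3) pushD_comb ..
  show "u *\<^sub>R x + v *\<^sub>R y \<in> DSet dA dB xf"
    unfolding DSet_def using n s e by blast
qed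

lemma DSet_prob: assumes "q \<in> DSet dA dB xf" shows "q \<in> prob_dists"
proof -
  obtain P where P: "\<forall>a<dA. \<forall>b<dB. 0 \<le> P a b" "(\<Sum>a<dA. \<Sum>b<dB. P a b) = 1" "q = pushD dA dB xf P"
    using assms unfolding DSet_def by blast
  have "0 \<le> q $ x" for x unfolding P(3) pushD_def using P(1) by (auto intro!: sum_nonneg)
  moreover have "(\<Sum>x\<in>UNIV. q $ x) = 1"
  proof -
    have "(\<Sum>x\<in>UNIV. q $ x) = (\<Sum>x\<in>UNIV. \<Sum>a<dA. \<Sum>b<dB. if xf a b = x then P a b else 0)"
      unfolding P(3) pushD_def by simp
    also have "\<dots> = (\<Sum>a<dA. \<Sum>x\<in>UNIV. \<Sum>b<dB. if xf a b = x then P a b else 0)"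
      by (rule sum.swap)
    also have "\<dots> = (\<Sum>a<dA. \<Sum>b<dB. \<Sum>x\<in>UNIV. if xf a b = x then P a b else 0)"
      by (rule sum.cong[OF refl], rule sum.swap)
    also have "\<dots> = (\<Sum>a<dA. \<Sum>b<dB. P a b)" by simp
    finally show ?thesis using P(2) by simp
  qed
  ultimately show ?thesis unfolding prob_dists_def by auto
qed

lemma sq_convex: fixes u v a b :: real assumes "0 \<le> u" "0 \<le> v" "u + v = 1"
  shows "(u * a + v * b)^2 \<le> u * a^2 + v * b^2"
proof -
  have v: "v = 1 - u" using assms by simp
  have "u * a^2 + v * b^2 - (u * a + v * b)^2 = u * v * (a-b)^2" unfolding v by (simp add: algebra_simps power2_eq_square)
  moreover have "0 \<le> u * v * (a-b)^2" using assms by simp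
  ultimately show ?thesis by linarith
qed

lemma Var_alt:
  assumes "p \<in> prob_dists"
  shows "Var_f f p = (\<Sum>x\<in>UNIV. p $ x * (f (point_dist x))^2) - (\<Sum>x\<in>UNIV. p $ x * f (point_dist x))^2"
proof -
  define g where "g x = f (point_dist x)" for x
  define m where "m = (\<Sum>x\<in>UNIV. p $ x * g x)"
  have s1: "(\<Sum>x\<in>UNIV. p $ x) = 1" using assms unfolding prob_dists_def by auto
  have "Var_f f p = (\<Sum>x\<in>UNIV. p $ x * (g x)^2 - 2 * m * (p $ x * g x) + m^2 * p $ x)"
    unfolding Var_f_def g_def[symmetric] m_def[symmetric]
    by (rule sum.cong) (simp_all add: power2_diff algebra_simps)
  also have "\<dots> = (\<Sum>x\<in>UNIV. p $ x * (g x)^2) - 2 * m * m + m^2 * 1"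
    by (simp add: sum.distrib sum_subtractf sum_distrib_left[symmetric] m_def[symmetric] s1)
  finally show ?thesis unfolding g_def m_def by (simp add: power2_eq_square)
qed

lemma Var_nonneg: assumes "p \<in> prob_dists" shows "0 \<le> Var_f f p"
  using assms unfolding Var_f_def prob_dists_def by (auto intro!: sum_nonneg)

lemma prob_comb: assumes "p \<in> prob_dists" "q \<in> prob_dists" "0 \<le> u" "0 \<le> v" "u + v = 1"
  shows "u *\<^sub>R p + v *\<^sub>R q \<in> prob_dists"
  using assms unfolding prob_dists_def by (auto simp: sum.distrib sum_distrib_left[symmetric])

lemma Var_concave: assumes "p \<in> prob_dists" "q \<in> prob_dists" "0 \<le> u" "0 \<le> v" "u + v = 1"
  shows "u * Var_f f p + v * Var_f f q \<le> Var_f f (u *\<^sub>R p + v *\<^sub>R q)"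
proof -
  define g where "g x = f (point_dist x)" for x
  define S where "S p = (\<Sum>x\<in>UNIV. p $ x * (g x)^2)" for p :: "real^'a"
  define m where "m p = (\<Sum>x\<in>UNIV. p $ x * g x)" for p :: "real^'a"
  have V: "Var_f f r = S r - (m r)^2" if "r \<in> prob_dists" for r
    using Var_alt[OF that] unfolding S_def m_def g_def by simp
  have Sl: "S (u *\<^sub>R p + v *\<^sub>R q) = u * S p + v * S q"
    unfolding S_def by (simp add: sum.distrib sum_distrib_left algebra_simps)
  have ml: "m (u *\<^sub>R p + v *\<^sub>R q) = u * m p + v * m q"
    unfolding m_def by (simp add: sum.distrib sum_distrib_left algebra_simps)
  have "(u * m p + v * m q)^2 \<le> u * (m p)^2 + v * (m q)^2" using sq_convex assms by blast
  moreover have "u * Var_f f p + v * Var_f f q = u * S p + v * S q - (u * (m p)^2 + v * (m q)^2)"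
    by (simp only: V[OF assms(1)] V[OF assms(2)]) (simp add: algebra_simps)
  moreover have "Var_f f (u *\<^sub>R p + v *\<^sub>R q) = u * S p + v * S q - (u * m p + v * m q)^2"
    using V[OF prob_comb[OF assms]] Sl ml by simp
  ultimately show ?thesis by linarith
qed

lemma h_concave: fixes L u v x y z :: real
  assumes "0 \<le> L" "0 \<le> x" "0 \<le> y" "0 \<le> u" "0 \<le> v" "u + v = 1" "u * x + v * y \<le> z"
  shows "u * (L + sqrt (2 + x))^2 + v * (L + sqrt (2 + y))^2 \<le> (L + sqrt (2 + z))^2"
proof -
  define a where "a = sqrt (2 + x)"
  define b where "b = sqrt (2 + y)"
  define c where "c = sqrt (2 + z)"
  have "0 \<le> u * x" "0 \<le> v * y" using assms by simp_all
  then have z0: "0 \<le> 2 + z" using assms(7) by linarith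
  have a2: "a^2 = 2 + x" unfolding a_def using assms by simp
  have b2: "b^2 = 2 + y" unfolding b_def using assms by simp
  have c2: "c^2 = 2 + z" unfolding c_def using z0 by simp
  have c0: "0 \<le> c" unfolding c_def using z0 by simp
  have "u * a^2 + v * b^2 = 2 * (u + v) + (u * x + v * y)" unfolding a2 b2 by (simp add: algebra_simps)
  then have abc: "u * a^2 + v * b^2 \<le> c^2" using assms c2 by simp
  have "(u * a + v * b)^2 \<le> c^2" using sq_convex[OF assms(4,5,6), of a b] abc by linarith
  then have cge: "u * a + v * b \<le> c" using c0 by (rule power2_le_imp_le)
  have "2 * L * (u * a + v * b) \<le> 2 * L * c" using cge assms(1) by (intro mult_left_mono) auto
  have "u * (L + a)^2 + v * (L + b)^2 = (u + v) * L^2 + 2 * L * (u * a + v * b) + (u * a^2 + v * b^2)"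
    by (simp add: power2_sum algebra_simps)
  also have "\<dots> \<le> L^2 + 2 * L * c + c^2"
    using \<open>2 * L * (u * a + v * b) \<le> 2 * L * c\<close> abc assms(6) by simp
  also have "\<dots> = (L + c)^2" by (simp add: power2_sum)
  finally show ?thesis unfolding a_def b_def c_def .
qed

lemma V_concave: assumes "p \<in> prob_dists" "q \<in> prob_dists" "0 \<le> u" "0 \<le> v" "u + v = 1"
  shows "u * V_f dA f p + v * V_f dA f q \<le> V_f dA f (u *\<^sub>R p + v *\<^sub>R q)"
proof -
  define L where "L = log 2 (1 + 2 * (real dA)^2)"
  have L0: "0 \<le> L" unfolding L_def by (subst zero_le_log_cancel_iff) (auto intro: add_pos_nonneg)
  have "u * (L + sqrt (2 + Var_f f p))^2 + v * (L + sqrt (2 + Var_f f q))^2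
     \<le> (L + sqrt (2 + Var_f f (u *\<^sub>R p + v *\<^sub>R q)))^2"
    using h_concave[OF L0 Var_nonneg[OF assms(1)] Var_nonneg[OF assms(2)] assms(3-5) Var_concave[OF assms]] .
  then have "ln 2 / 2 * (u * (L + sqrt (2 + Var_f f p))^2 + v * (L + sqrt (2 + Var_f f q))^2)
     \<le> ln 2 / 2 * (L + sqrt (2 + Var_f f (u *\<^sub>R p + v *\<^sub>R q)))^2"
    by (intro mult_left_mono) auto
  then show ?thesis unfolding V_f_def L_def[symmetric] by (simp add: algebra_simps)
qed

lemma combine: fixes R F V c a u v Rp Rq Fp Fq Vp Vq :: real
  assumes "R \<le> u * Rp + v * Rq" "F = u * Fp + v * Fq" "a * (u * Vp + v * Vq) \<le> a * V" "u + v=1"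
  shows "R - F - a * V - c \<le> u * (Rp - Fp - a * Vp - c) + v * (Rq - Fq - a * Vq - c)"
proof -
  have "u * (Rp - Fp - a * Vp - c) + v * (Rq - Fq - a * Vq - c)
      = (u * Rp + v * Rq) - (u * Fp + v * Fq) - a * (u * Vp + v * Vq) - (u + v) * c" by (simp add: algebra_simps)
  then show ?thesis using assms by simp
qed

theorem mainTheorem3:
  fixes dA dB :: nat and xf :: "nat \<Rightarrow> nat \<Rightarrow> 'x::finite"
    and f rate :: "real^'x \<Rightarrow> real" and \<alpha> :: real
  assumes "min_tradeoff dA dB xf f"
    and "is_rate_function dA dB xf rate"
    and "convex_rate dA dB xf rate"
    and "1 < \<alpha>" and "\<alpha> < 2"
  shows "convex (QSet dA dB xf) \<and>
         convex_on (QSet dA dB xf)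
           (\<lambda>p. Delta_f rate f p - (\<alpha> - 1) * V_f dA f p - (\<alpha> - 1)^2 * K_alpha dA dB xf \<alpha> f)"
proof -
  have Qeq: "QSet dA dB xf = DSet dA dB xf" using QSet_sub_DSet DSet_sub_QSet by blast
  have cQ: "convex (QSet dA dB xf)" unfolding Qeq by (rule convex_DSet)
  have Qp: "p \<in> prob_dists" if "p \<in> QSet dA dB xf" for p using that DSet_prob unfolding Qeq by blast
  have aff: "affine_on_dists f" using assms(1) unfolding min_tradeoff_def by simp
  have "convex_on (QSet dA dB xf)
           (\<lambda>p. Delta_f rate f p - (\<alpha> - 1) * V_f dA f p - (\<alpha> - 1)^2 * K_alpha dA dB xf \<alpha> f)"
    unfolding convex_on_def
  proof (intro conjI cQ ballI allI impI)
    fix p q and u v :: real assume p: "p \<in> QSet dA dB xf" and q: "q \<in> QSet dA dB xf"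
      and u: "0 \<le> u" and v: "0 \<le> v" and uv: "u + v = 1"
    have vv: "v = 1 - u" using uv by simp
    have r: "u *\<^sub>R p + v *\<^sub>R q \<in> QSet dA dB xf" using convexD[OF cQ p q u v uv] .
    have R: "rate (u *\<^sub>R p + v *\<^sub>R q) \<le> u * rate p + v * rate q"
      using assms(3) p q u v uv r unfolding convex_rate_def vv by auto
    have F: "f (u *\<^sub>R p + v *\<^sub>R q) = u * f p + v * f q"
      using aff Qp[OF p] Qp[OF q] u v uv unfolding affine_on_dists_def vv by auto
    have Vc: "u * V_f dA f p + v * V_f dA f q \<le> V_f dA f (u *\<^sub>R p + v *\<^sub>R q)"
      using V_concave[OF Qp[OF p] Qp[OF q] u v uv] .
    have "(\<alpha> - 1) * (u * V_f dA f p + v * V_f dA f q) \<le> (\<alpha> - 1) * V_f dA f (u *\<^sub>R p + v *\<^sub>R q)"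
      using Vc assms(4) by (intro mult_left_mono) auto
    from combine[OF R F this uv, of "(\<alpha> - 1)^2 * K_alpha dA dB xf \<alpha> f"]
    show "Delta_f rate f (u *\<^sub>R p + v *\<^sub>R q) - (\<alpha> - 1) * V_f dA f (u *\<^sub>R p + v *\<^sub>R q) - (\<alpha> - 1)^2 * K_alpha dA dB xf \<alpha> f
       \<le> u * (Delta_f rate f p - (\<alpha> - 1) * V_f dA f p - (\<alpha> - 1)^2 * K_alpha dA dB xf \<alpha> f)
        + v * (Delta_f rate f q - (\<alpha> - 1) * V_f dA f q - (\<alpha> - 1)^2 * K_alpha dA dB xf \<alpha> f)"
      unfolding Delta_f_def by simp
  qed
  then show ?thesis using cQ by simp
qed

end
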